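(* Let $X$ be a metric space and $v\in X$ a point such that $\mathscr C(v)$ is finite, and let $A_v:=A(d_v)$. Then: (1) every $A\in\mathscr A(X)$ with $A\subset A_v$ satisfies $\mathrm{rk}(A)\le\frac12|\mathscr C(v)|$; (2) there are at most $2^{|\mathscr C(v)|-1}-1$ sets $A\in\mathscr A(X)$ with $A\subset A_v$ and $\mathrm{rk}(A)=1$.
   Context: $d_v=d(\cdot,v)$. $I(x,y)=\{u: d(x,u)+d(u,y)=d(x,y)\}$, $C(x,v)=\{y: v\in I(x,y)\}$, and $\mathscr C(v)=\{C(x,v): x\in X\}$. For $f\colon X\to\mathbb R$, $A(f)$ is the set of unordered pairs $\{x,y\}$ ($x=y$ allowed) with $f(x)+f(y)=d(x,y)$; $\Delta(X)=\{f: f(x)+f(y)\ge d(x,y)\ \forall x,y\}$; $\mathscr A(X)=\{A(f): f\in\Delta(X),\ \bigcup A(f)=X\}$; $\mathrm{rk}(A)=\dim\{g\in\mathbb R^X: g(x)+g(y)=d(x,y)\ \forall\{x,y\}\in A\}$. *)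

theory Defs
  imports "HOL-Analysis.Analysis" "HOL-Library.Function_Algebras"
begin

text \<open>The metric space X is the whole type 'a (class metric_space), d = dist.\<close>

definition dv :: "'a::metric_space \<Rightarrow> 'a \<Rightarrow> real" where
  "dv v = (\<lambda>x. dist x v)"

definition interval :: "'a::metric_space \<Rightarrow> 'a \<Rightarrow> 'a set" where
  "interval x y = {u. dist x u + dist u y = dist x y}"

definition Cone :: "'a::metric_space \<Rightarrow> 'a \<Rightarrow> 'a set" where
  "Cone x v = {y. v \<in> interval x y}"

definition Cones :: "'a::metric_space \<Rightarrow> 'a set set" where
  "Cones v = {Cone x v | x. True}"

text \<open>Unordered pairs {x,y} (x = y allowed) are represented as sets {x,y}.\<close>
definition Aset :: "('a::metric_space \<Rightarrow> real) \<Rightarrow> 'a set set" where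
  "Aset f = {{x, y} | x y. f x + f y = dist x y}"

definition Delta :: "('a::metric_space \<Rightarrow> real) set" where
  "Delta = {f. \<forall>x y. f x + f y \<ge> dist x y}"

definition AA :: "'a::metric_space set set set" where
  "AA = {Aset f | f. f \<in> Delta \<and> \<Union>(Aset f) = UNIV}"

definition Sol :: "'a::metric_space set set \<Rightarrow> ('a \<Rightarrow> real) set" where
  "Sol A = {g. \<forall>x y. {x, y} \<in> A \<longrightarrow> g x + g y = dist x y}"

text \<open>Dimension of the affine solution set = dimension of its direction space.\<close>
definition rk_space :: "'a::metric_space set set \<Rightarrow> ('a \<Rightarrow> real) set" where
  "rk_space A = {g - h | g h. g \<in> Sol A \<and> h \<in> Sol A}"

definition fscale :: "real \<Rightarrow> ('a \<Rightarrow> real) \<Rightarrow> ('a \<Rightarrow> real)" where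
  "fscale c f = (\<lambda>x. c * f x)"

lemma vector_space_fscale: "vector_space fscale"
  by unfold_locales (auto simp: fscale_def algebra_simps)

definition rk :: "'a::metric_space set set \<Rightarrow> nat" where
  "rk A = vector_space.dim fscale (rk_space A)"

end

theory Submission
  imports Defs
begin

lemma pair_mem: "{x,y} \<in> Aset f \<longleftrightarrow> f x + f y = dist x y"
proof
  assume "{x,y} \<in> Aset f"
  then obtain a b where ab: "{x,y} = {a,b}" "f a + f b = dist a b" unfolding Aset_def by blast
  from ab(1) have "(x = a \<and> y = b) \<or> (x = b \<and> y = a)" by (simp add: doubleton_eq_iff)
  then show "f x + f y = dist x y"
  proof
    assume "x = a \<and> y = b" then show ?thesis using ab(2) by simp
  next
    assume "x = b \<and> y = a" then show ?thesis using ab(2) by (simp add: dist_commute add.commute)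
  qed
next
  assume "f x + f y = dist x y"
  then show "{x,y} \<in> Aset f" unfolding Aset_def by blast
qed

lemma cover: "\<Union>(Aset f) = UNIV \<Longrightarrow> \<exists>y. f x + f y = dist x y"
proof -
  assume u: "\<Union>(Aset f) = UNIV"
  have "x \<in> \<Union>(Aset f)" unfolding u by (rule UNIV_I)
  then obtain p where "p \<in> Aset f" "x \<in> p" by (rule UnionE)
  then obtain a b where ab: "p = {a,b}" "f a + f b = dist a b" unfolding Aset_def by blast
  then have "x = a \<or> x = b" using \<open>x \<in> p\<close> by blast
  then show ?thesis
  proof
    assume "x = a" then show ?thesis using ab(2) by blast
  next
    assume "x = b"
    moreover have "f b + f a = dist b a" using ab(2) by (metis add.commute dist_commute)
    ultimately show ?thesis by blast
  qed
qed

lemma cone_mem: "y \<in> Cone x v \<longleftrightarrow> dist x v + dist v y = dist x y"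
  by (simp add: Cone_def interval_def)

lemma dominate:
  assumes fin: "finite V" and nb: "\<And>u. u\<in>V \<Longrightarrow> \<exists>w\<in>V. E u w"
    and sym: "\<And>u w. E u w \<Longrightarrow> E w u"
  shows "\<exists>T\<subseteq>V. 2*card T \<le> card V \<and> (\<forall>u\<in>V. u\<in>T \<or> (\<exists>w\<in>T. E u w) \<or> E u u)"
proof -
  define dom where "dom D \<longleftrightarrow> (\<forall>u\<in>V. u\<in>D \<or> (\<exists>w\<in>D. E u w) \<or> E u u)" for D
  have "V \<subseteq> V \<and> dom V" by (auto simp: dom_def)
  then obtain D where D: "D \<subseteq> V \<and> dom D" and Dmin: "\<And>D'. D' \<subseteq> V \<and> dom D' \<Longrightarrow> card D \<le> card D'"
    using ex_has_least_nat[of "\<lambda>D. D \<subseteq> V \<and> dom D" V card] by blast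
  have finD: "finite D" using D fin finite_subset by blast
  have "dom (V - D)"
    unfolding dom_def
  proof
    fix u assume uV: "u \<in> V"
    show "u \<in> V - D \<or> (\<exists>w\<in>V - D. E u w) \<or> E u u"
    proof (rule ccontr)
      assume c: "\<not> ?thesis"
      then have uD: "u \<in> D" and nl: "\<not> E u u" and nn: "\<And>w. w \<in> V - D \<Longrightarrow> \<not> E u w" using uV by auto
      have "dom (D - {u})" unfolding dom_def
      proof
        fix z assume zV: "z \<in> V"
        show "z \<in> D - {u} \<or> (\<exists>w\<in>D - {u}. E z w) \<or> E z z"
        proof (cases "z = u")
          case True
          obtain w where "w \<in> V" "E u w" using nb uV by blast
          then have "w \<noteq> u" "w \<in> D" using nl nn by auto
          then show ?thesis using True \<open>E u w\<close> by auto
        next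
          case False
          show ?thesis
          proof (cases "z \<in> D")
            case True then show ?thesis using False by auto
          next
            case zD: False
            then have "(\<exists>w\<in>D. E z w) \<or> E z z" using D zV unfolding dom_def by auto
            then show ?thesis
            proof
              assume "\<exists>w\<in>D. E z w"
              then obtain w where "w \<in> D" "E z w" by blast
              moreover have "w \<noteq> u" using nn[of z] zV zD sym[OF \<open>E z w\<close>] by blast
              ultimately show ?thesis by auto
            qed auto
          qed
        qed
      qed
      then have "card D \<le> card (D - {u})" using Dmin[of "D - {u}"] D by auto
      moreover have "card (D - {u}) < card D" using finD uD by (meson card_Diff1_less)
      ultimately show False by simp
    qed
  qed
  have DV: "D \<subseteq> V" using D by blast
  have c1: "card (V - D) = card V - card D" using card_Diff_subset[OF finD DV] .
  have c2: "card D \<le> card V" using card_mono[OF fin DV] .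
  have "card D + card (V - D) = card V" using c1 c2 by linarith
  show ?thesis
  proof (cases "card D \<le> card (V - D)")
    case True
    then have "2 * card D \<le> card V" using \<open>card D + card (V - D) = card V\<close> by linarith
    have dD: "\<forall>u\<in>V. u\<in>D \<or> (\<exists>w\<in>D. E u w) \<or> E u u" using D unfolding dom_def by simp
    show ?thesis
      apply (rule exI[of _ D])
      apply (intro conjI)
        apply (fact D[THEN conjunct1])
       apply (fact \<open>2 * card D \<le> card V\<close>)
      by (fact dD)
  next
    case False
    then have "2 * card (V - D) \<le> card V" using \<open>card D + card (V - D) = card V\<close> by linarith
    have dD: "\<forall>u\<in>V. u\<in>V - D \<or> (\<exists>w\<in>V - D. E u w) \<or> E u u"
      using \<open>dom (V - D)\<close> unfolding dom_def by simp
    show ?thesis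
      apply (rule exI[of _ "V - D"])
      apply (intro conjI)
        apply blast
       apply (fact \<open>2 * card (V - D) \<le> card V\<close>)
      by (fact dD)
  qed
qed

lemma fsum_apply: "(sum F T) x = (\<Sum>C\<in>T. F C x)" for F :: "'b \<Rightarrow> 'a \<Rightarrow> real"
  by (induction T rule: infinite_finite_induct) auto

definition Pp :: "'a::metric_space \<Rightarrow> 'a set \<Rightarrow> 'a set" where
  "Pp v Q = {y. \<exists>q\<in>Q. dist q v + dist v y = dist q y}"

definition Phi :: "'a::metric_space \<Rightarrow> 'a set \<Rightarrow> 'a \<Rightarrow> 'a \<Rightarrow> bool" where
  "Phi v Q x y \<longleftrightarrow> dist x v + dist v y = dist x y \<and>
     ((x \<in> Q \<and> y \<in> Pp v Q) \<or> (y \<in> Q \<and> x \<in> Pp v Q) \<or>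
      (x \<notin> Q \<and> x \<notin> Pp v Q \<and> y \<notin> Q \<and> y \<notin> Pp v Q))"

locale SS =
  fixes v :: "'a::metric_space" and f :: "'a \<Rightarrow> real"
  assumes fD: "f \<in> Delta" and cov: "\<Union>(Aset f) = UNIV" and sub: "Aset f \<subseteq> Aset (dv v)"
begin

sublocale fs: vector_space "fscale :: real \<Rightarrow> ('a \<Rightarrow> real) \<Rightarrow> ('a \<Rightarrow> real)"
  by (rule vector_space_fscale)

definition P where "P x y \<longleftrightarrow> f x + f y = dist x y"
definition K :: "('a \<Rightarrow> real) set" where "K = {h. \<forall>x y. P x y \<longrightarrow> h x + h y = 0}"
definition g where "g = (\<lambda>x. f x - dist x v)"

lemma delta: "f x + f y \<ge> dist x y" using fD by (auto simp: Delta_def)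

lemma PR: "P x y \<Longrightarrow> dist x v + dist v y = dist x y"
proof -
  assume "P x y"
  then have "{x,y} \<in> Aset f" by (simp add: pair_mem P_def)
  then have "{x,y} \<in> Aset (dv v)" using sub by blast
  then have "dist x v + dist y v = dist x y" by (simp add: pair_mem dv_def)
  then show ?thesis by (metis dist_commute)
qed

lemma Psym: "P x y \<Longrightarrow> P y x" unfolding P_def by (metis add.commute dist_commute)

lemma partner: "\<exists>y. P x y" using cover[OF cov] by (simp add: P_def)

lemma sat: assumes c: "Cone x v = Cone x' v" and p: "P x y" shows "P x' y"
proof -
  have "y \<in> Cone x v" using PR[OF p] by (simp add: cone_mem)
  then have e1: "dist x' v + dist v y = dist x' y" using c by (simp add: cone_mem)
  obtain y' where p': "P x' y'" using partner by blast
  have "y' \<in> Cone x v" using PR[OF p'] c by (simp add: cone_mem)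
  then have e2: "dist x v + dist v y' = dist x y'" by (simp add: cone_mem)
  have "f x' + f y \<ge> dist x' y" "f x + f y' \<ge> dist x y'" by (rule delta)+
  then show ?thesis using p p' e1 e2 PR[OF p] PR[OF p'] unfolding P_def by linarith
qed

lemma rk_space_eq: "rk_space (Aset f) = K"
proof
  show "rk_space (Aset f) \<subseteq> K"
    by (auto simp: rk_space_def K_def Sol_def pair_mem P_def fun_diff_def algebra_simps)
next
  show "K \<subseteq> rk_space (Aset f)"
  proof
    fix h assume h: "h \<in> K"
    have "f + h \<in> Sol (Aset f)" "f \<in> Sol (Aset f)" using h
      by (auto simp: Sol_def pair_mem K_def P_def algebra_simps)
    moreover have "h = (f + h) - f" by (simp add: fun_diff_def)
    ultimately show "h \<in> rk_space (Aset f)" unfolding rk_space_def by blast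
  qed
qed

lemma K_const: "h \<in> K \<Longrightarrow> Cone x v = Cone x' v \<Longrightarrow> h x = h x'"
proof -
  assume h: "h \<in> K" and c: "Cone x v = Cone x' v"
  obtain y where "P x y" using partner by blast
  moreover then have "P x' y" using sat c by blast
  ultimately have "h x + h y = 0" "h x' + h y = 0" using h by (auto simp: K_def)
  then show ?thesis by linarith
qed

lemma K_sub: "fs.subspace K"
  unfolding fs.subspace_def K_def
  by (auto simp: fscale_def algebra_simps) (metis distrib_left mult_zero_right)

definition rep where "rep C = (SOME x. Cone x v = C)"
lemma rep: "C \<in> Cones v \<Longrightarrow> Cone (rep C) v = C"
proof -
  assume "C \<in> Cones v"
  then have "\<exists>x. Cone x v = C" unfolding Cones_def by blast
  then show ?thesis unfolding rep_def by (rule someI_ex)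
qed
definition Ind where "Ind C = (\<lambda>x. if Cone x v = C then 1 else (0::real))"
definition rT where "rT T h = (\<lambda>x. if Cone x v \<in> T then h x else 0)"

lemma rT_span:
  assumes T: "T \<subseteq> Cones v" "finite T" and h: "h \<in> K"
  shows "rT T h \<in> fs.span (Ind ` T)"
proof -
  have "rT T h = (\<Sum>C\<in>T. fscale (h (rep C)) (Ind C))"
  proof
    fix x
    have "(\<Sum>C\<in>T. fscale (h (rep C)) (Ind C)) x = (\<Sum>C\<in>T. if Cone x v = C then h (rep C) else 0)"
      by (simp add: fsum_apply fscale_def Ind_def if_distrib cong: if_cong)
    also have "\<dots> = (if Cone x v \<in> T then h (rep (Cone x v)) else 0)"
      using T(2) by simp
    also have "\<dots> = rT T h x"
      using K_const[OF h, of "rep (Cone x v)" x] rep[of "Cone x v"] T(1)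
      by (auto simp: rT_def)
    finally show "rT T h x = (\<Sum>C\<in>T. fscale (h (rep C)) (Ind C)) x" by simp
  qed
  also have "\<dots> \<in> fs.span (Ind ` T)"
    by (intro fs.span_sum fs.span_scale fs.span_base) auto
  finally show ?thesis .
qed

lemma hom: "module_hom fscale fscale (rT T)"
  unfolding module_hom_def module_hom_axioms_def
  using fs.module_axioms
  by (auto simp: rT_def fscale_def fun_eq_iff)

lemma span_fin: "finite (Cones v) \<Longrightarrow> K \<subseteq> fs.span (Ind ` Cones v)"
proof
  fix h assume "finite (Cones v)" "h \<in> K"
  moreover have "rT (Cones v) h = h" unfolding rT_def Cones_def by (rule ext) auto
  ultimately show "h \<in> fs.span (Ind ` Cones v)" using rT_span[of "Cones v" h] by auto
qed


lemma rk_bound: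
  assumes fin: "finite (Cones v)"
  shows "2 * fs.dim K \<le> card (Cones v)"
proof -
  define E where "E C1 C2 \<longleftrightarrow> (\<exists>x y. C1 = Cone x v \<and> C2 = Cone y v \<and> P x y)" for C1 C2
  have nb: "\<exists>w\<in>Cones v. E u w" if uC: "u \<in> Cones v" for u
  proof -
    obtain x where x: "u = Cone x v" using uC unfolding Cones_def by blast
    obtain y where "P x y" using partner by blast
    show ?thesis
    proof (rule bexI[of _ "Cone y v"])
      show "E u (Cone y v)" unfolding E_def using x \<open>P x y\<close> by blast
      show "Cone y v \<in> Cones v" unfolding Cones_def by blast
    qed
  qed
  have sym: "E w u" if "E u w" for u w
  proof -
    from that obtain x y where xy: "u = Cone x v" "w = Cone y v" "P x y" unfolding E_def by blast
    have "P y x" using Psym[OF xy(3)] .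
    then show ?thesis unfolding E_def using xy(1,2) by blast
  qed
  obtain T where T0: "T \<subseteq> Cones v \<and> 2 * card T \<le> card (Cones v)
    \<and> (\<forall>u\<in>Cones v. u\<in>T \<or> (\<exists>w\<in>T. E u w) \<or> E u u)"
    using dominate[OF fin nb sym] by (rule exE)
  have T: "T \<subseteq> Cones v" "2 * card T \<le> card (Cones v)" using T0 by simp_all
  have dm: "\<forall>u\<in>Cones v. u\<in>T \<or> (\<exists>w\<in>T. E u w) \<or> E u u" using T0 by (rule conjunct2[THEN conjunct2])
  have finT: "finite T" using T fin finite_subset by blast
  have vanish: "h = 0" if h: "h \<in> K" and z: "\<And>x. Cone x v \<in> T \<Longrightarrow> h x = 0" for h
  proof
    fix x
    have "Cone x v \<in> Cones v" by (auto simp: Cones_def)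
    then have "Cone x v \<in> T \<or> (\<exists>w\<in>T. E (Cone x v) w) \<or> E (Cone x v) (Cone x v)" using dm by blast
    then show "h x = 0 x"
    proof (elim disjE)
      assume "Cone x v \<in> T" then show ?thesis using z by simp
    next
      assume "\<exists>w\<in>T. E (Cone x v) w"
      then obtain x1 y1 where "Cone x v = Cone x1 v" "Cone y1 v \<in> T" "P x1 y1" unfolding E_def by blast
      moreover then have "h x1 + h y1 = 0" using h by (auto simp: K_def)
      ultimately show ?thesis using z K_const[OF h, of x x1] by simp
    next
      assume "E (Cone x v) (Cone x v)"
      then obtain x1 y1 where "Cone x v = Cone x1 v" "Cone x v = Cone y1 v" "P x1 y1" unfolding E_def by blast
      moreover then have "h x1 + h y1 = 0" using h by (auto simp: K_def)
      ultimately show ?thesis using K_const[OF h, of x x1] K_const[OF h, of x y1] by simp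
    qed
  qed
  define r :: "('a \<Rightarrow> real) \<Rightarrow> ('a \<Rightarrow> real)" where "r = rT T"
  have inj: "inj_on r K"
  proof
    fix h1 h2 assume h: "h1 \<in> K" "h2 \<in> K" and e: "r h1 = r h2"
    have "h1 - h2 \<in> K" using fs.subspace_diff[OF K_sub h] .
    moreover have "(h1 - h2) x = 0" if "Cone x v \<in> T" for x
      using fun_cong[OF e, of x] that by (simp add: r_def rT_def)
    ultimately have "h1 - h2 = 0" using vanish by blast
    then show "h1 = h2" by simp
  qed
  obtain B where B: "B \<subseteq> K" "fs.independent B" "K \<subseteq> fs.span B" "card B = fs.dim K"
    using fs.basis_exists by blast
  have spB: "fs.span B = K"
    using fs.span_minimal[OF B(1) K_sub] B(3) by blast
  have "fs.independent (r ` B)"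
    using module_hom.dependent_inj_imageD[OF hom[of T], folded r_def] inj spB B(2) by metis
  moreover have "r ` B \<subseteq> fs.span (Ind ` T)"
    using rT_span[OF T(1) finT] B(1) unfolding r_def by blast
  ultimately have "card (r ` B) \<le> card (Ind ` T)"
    using fs.independent_span_bound[of "Ind ` T" "r ` B"] finT by blast
  also have "\<dots> \<le> card T" using finT card_image_le by blast
  finally have "card (r ` B) \<le> card T" .
  moreover have "card (r ` B) = card B"
    using card_image[OF inj_on_subset[OF inj B(1)]] .
  ultimately show ?thesis using B(4) T(2) by linarith
qed

lemma fv_nonneg: "f v \<ge> 0" using delta[of v v] by simp

lemma g_K: "g \<in> K"
  unfolding K_def g_def
proof (intro CollectI allI impI)
  fix x y assume p: "P x y"
  then have "dist x v + dist y v = dist x y" using PR[OF p] by (metis dist_commute)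
  then show "f x - dist x v + (f y - dist y v) = 0" using p by (simp add: P_def)
qed

lemma gv: "g v = f v" by (simp add: g_def)

lemma gv0: assumes "f v = 0" shows "fs.dim K = 0"
proof -
  have ge: "g y \<ge> 0" for y using delta[of y v] assms by (simp add: g_def)
  have g0: "g y = 0" for y
  proof -
    obtain z where "P y z" using partner by blast
    then have "g y + g z = 0" using g_K by (auto simp: K_def)
    then show ?thesis using ge[of y] ge[of z] by linarith
  qed
  have Pv: "P x v" for x using g0[of x] assms by (simp add: P_def g_def)
  have Ksub: "K \<subseteq> fs.span {}"
  proof
    fix h assume h: "h \<in> K"
    have "h v + h v = 0" using h Pv[of v] by (auto simp: K_def)
    then have hv: "h v = 0" by linarith
    have hx: "h x = 0" for x
    proof -
      have "h x + h v = 0" using h Pv[of x] by (auto simp: K_def)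
      then show ?thesis using hv by linarith
    qed
    then have "h = 0" by (intro ext) simp
    then show "h \<in> fs.span {}" by simp
  qed
  have "fs.dim K \<le> card ({} :: ('a \<Rightarrow> real) set)"
    using fs.dim_le_card[OF Ksub finite.emptyI] .
  then show ?thesis by simp
qed

lemma rk1:
  assumes d: "fs.dim K = 1"
  shows "f v > 0" and "\<And>x. g x \<noteq> 0 \<Longrightarrow> \<bar>g x\<bar> = f v"
proof -
  show fv: "f v > 0" using gv0 d fv_nonneg by fastforce
  obtain B where B: "B \<subseteq> K" "K \<subseteq> fs.span B" "card B = 1"
    using fs.basis_exists[of K] d by metis
  then obtain b where "B = {b}" using card_1_singletonE by blast
  then have Kb: "K \<subseteq> range (\<lambda>k. fscale k b)" using B fs.span_singleton by auto
  define g' where "g' = (\<lambda>x. if \<bar>g x\<bar> = f v then g x else 0)"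
  have "g' \<in> K"
    unfolding K_def
  proof (intro CollectI allI impI)
    fix x y assume "P x y"
    then have "g x + g y = 0" using g_K by (auto simp: K_def)
    then show "g' x + g' y = 0" unfolding g'_def by auto
  qed
  then obtain c where c: "g' = fscale c b" using Kb by blast
  obtain a where a: "g = fscale a b" using Kb g_K by blast
  have "g' v = g v" using gv fv by (simp add: g'_def)
  then have "c * b v = a * b v" using a c by (simp add: fscale_def)
  moreover have "b v \<noteq> 0" using a gv fv by (auto simp: fscale_def)
  ultimately have "c = a" by simp
  then have "g' = g" using a c by simp
  have e: "(if \<bar>g x\<bar> = f v then g x else 0) = g x" for x
    using fun_cong[OF \<open>g' = g\<close>, of x] unfolding g'_def by simp
  show "\<bar>g x\<bar> = f v" if "g x \<noteq> 0" for x
    using e[of x] that by (cases "\<bar>g x\<bar> = f v") auto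
qed

definition Qs where "Qs = {x. f x < dist x v}"

lemma P_Phi:
  assumes d: "fs.dim K = 1"
  shows "P x y \<longleftrightarrow> Phi v Qs x y"
proof -
  define t where "t = f v"
  have t: "t > 0" using rk1(1)[OF d] by (simp add: t_def)
  have vals: "g z = 0 \<or> g z = t \<or> g z = -t" for z
    using rk1(2)[OF d, of z] t_def by (cases "g z \<ge> 0") auto
  have Qs: "z \<in> Qs \<longleftrightarrow> g z = -t" for z
    using vals[of z] t by (auto simp: Qs_def g_def)
  have inPp: "z \<in> Pp v Qs \<longleftrightarrow> g z = t" for z
  proof
    assume "z \<in> Pp v Qs"
    then obtain q where q: "q \<in> Qs" "dist q v + dist v z = dist q z" by (auto simp: Pp_def)
    have "f q + f z \<ge> dist q z" by (rule delta)
    then have "g q + g z \<ge> 0" using q(2) dist_commute[of z v] unfolding g_def by linarith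
    then show "g z = t" using Qs[of q] q(1) vals[of z] t by auto
  next
    assume gz: "g z = t"
    obtain y where "P z y" using partner by blast
    then have "g z + g y = 0" "P y z" using g_K Psym[OF \<open>P z y\<close>] by (auto simp: K_def)
    then show "z \<in> Pp v Qs" using PR[of y z] gz Qs[of y] by (auto simp: Pp_def)
  qed
  have PE: "P x y \<longleftrightarrow> dist x v + dist v y = dist x y \<and> g x + g y = 0"
  proof
    assume p: "P x y"
    then show "dist x v + dist v y = dist x y \<and> g x + g y = 0"
      using PR[OF p] dist_commute[of y v] unfolding P_def g_def by auto
  next
    assume "dist x v + dist v y = dist x y \<and> g x + g y = 0"
    then show "P x y" using dist_commute[of y v] unfolding P_def g_def by auto
  qed
  have key: "a + b = 0 \<longleftrightarrow> ((a = -t \<and> b = t) \<or> (b = -t \<and> a = t) \<or> (a \<noteq> -t \<and> a \<noteq> t \<and> b \<noteq> -t \<and> b \<noteq> t))"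
    if "a = 0 \<or> a = t \<or> a = -t" "b = 0 \<or> b = t \<or> b = -t" for a b :: real
    using that t by linarith
  show ?thesis unfolding PE Phi_def Qs inPp
    using key[OF vals[of x] vals[of y]] by blast
qed

lemma Qs_ne: "fs.dim K = 1 \<Longrightarrow> Qs \<noteq> {}"
proof -
  assume d: "fs.dim K = 1"
  obtain z where "P v z" using partner by blast
  then have "g v + g z = 0" using g_K by (auto simp: K_def)
  then have "g z < 0" using rk1(1)[OF d] gv by simp
  then show ?thesis by (auto simp: Qs_def g_def)
qed

lemma Qs_cone: "fs.dim K = 1 \<Longrightarrow> Cone x v = Cone x' v \<Longrightarrow> x \<in> Qs \<Longrightarrow> x' \<in> Qs"
  using K_const[OF g_K, of x x'] by (simp add: Qs_def g_def)

lemma v_Qs: "fs.dim K = 1 \<Longrightarrow> v \<notin> Qs"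
  using rk1(1) by (simp add: Qs_def)

end


theorem proposition5p6:
  fixes v :: "'a::metric_space"
  assumes "finite (Cones v)"
  shows "(\<forall>A \<in> AA. A \<subseteq> Aset (dv v) \<longrightarrow>
            (\<exists>B. finite B \<and> rk_space A \<subseteq> module.span fscale B) \<and> 2 * rk A \<le> card (Cones v))
       \<and> finite {A \<in> AA. A \<subseteq> Aset (dv v) \<and> rk A = 1}
       \<and> card {A \<in> AA. A \<subseteq> Aset (dv v) \<and> rk A = 1} \<le> 2 ^ (card (Cones v) - 1) - 1"
proof -
  have fin: "finite (Cones v)" by fact
  define fA where "fA A = (SOME f. A = Aset f \<and> f \<in> Delta \<and> \<Union>(Aset f) = UNIV)" for A :: "'a set set"
  have fA: "A = Aset (fA A) \<and> fA A \<in> Delta \<and> \<Union>(Aset (fA A)) = UNIV" if "A \<in> AA" for A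
  proof -
    have "\<exists>f. A = Aset f \<and> f \<in> Delta \<and> \<Union>(Aset f) = UNIV" using that unfolding AA_def by blast
    then show ?thesis unfolding fA_def by (rule someI_ex)
  qed
  have part1: "\<forall>A \<in> AA. A \<subseteq> Aset (dv v) \<longrightarrow>
            (\<exists>B. finite B \<and> rk_space A \<subseteq> module.span fscale B) \<and> 2 * rk A \<le> card (Cones v)"
  proof (intro ballI impI)
    fix A assume A: "A \<in> AA" "A \<subseteq> Aset (dv v)"
    interpret S: SS v "fA A" using fA[OF A(1)] A(2) by unfold_locales auto
    have e: "rk_space A = S.K" using S.rk_space_eq fA[OF A(1)] by simp
    have "rk A = S.fs.dim S.K" unfolding rk_def e ..
    then show "(\<exists>B. finite B \<and> rk_space A \<subseteq> module.span fscale B) \<and> 2 * rk A \<le> card (Cones v)"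
      using S.span_fin[OF fin] S.rk_bound[OF fin] fin e by auto
  qed
  define Set1 where "Set1 = {A \<in> AA. A \<subseteq> Aset (dv v) \<and> rk A = 1}"
  define QA where "QA A = {x. fA A x < dist x v}" for A
  have rep1: "A = {{x,y}| x y. Phi v (QA A) x y} \<and> QA A \<noteq> {} \<and> v \<notin> QA A \<and>
      (\<forall>x x'. Cone x v = Cone x' v \<longrightarrow> x \<in> QA A \<longrightarrow> x' \<in> QA A)" if A1: "A \<in> Set1" for A
  proof -
    have A: "A \<in> AA" "A \<subseteq> Aset (dv v)" "rk A = 1" using A1 unfolding Set1_def by auto
    interpret S: SS v "fA A" using fA[OF A(1)] A(2) by unfold_locales auto
    have e: "rk_space A = S.K" using S.rk_space_eq fA[OF A(1)] by simp
    have d: "S.fs.dim S.K = 1" using A(3) unfolding rk_def e .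
    have q: "QA A = S.Qs" unfolding QA_def S.Qs_def ..
    have "A = Aset (fA A)" using fA[OF A(1)] by simp
    also have "\<dots> = {{x,y}| x y. S.P x y}" unfolding Aset_def S.P_def ..
    also have "\<dots> = {{x,y}| x y. Phi v (QA A) x y}" unfolding q S.P_Phi[OF d] ..
    finally have eqA: "A = {{x,y}| x y. Phi v (QA A) x y}" .
    show ?thesis
    proof (intro conjI)
      show "A = {{x,y}| x y. Phi v (QA A) x y}" by (rule eqA)
      show "QA A \<noteq> {}" unfolding q by (rule S.Qs_ne[OF d])
      show "v \<notin> QA A" unfolding q by (rule S.v_Qs[OF d])
      show "\<forall>x x'. Cone x v = Cone x' v \<longrightarrow> x \<in> QA A \<longrightarrow> x' \<in> QA A"
        unfolding q using S.Qs_cone[OF d] by blast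
    qed
  qed
  have inj: "inj_on QA Set1"
  proof
    fix A1 A2 assume a: "A1 \<in> Set1" "A2 \<in> Set1" and eq: "QA A1 = QA A2"
    have "A1 = {{x,y}| x y. Phi v (QA A1) x y}" using rep1[OF a(1)] by (rule conjunct1)
    also have "\<dots> = {{x,y}| x y. Phi v (QA A2) x y}" unfolding eq ..
    also have "\<dots> = A2" using rep1[OF a(2)] by (rule conjunct1[THEN sym])
    finally show "A1 = A2" .
  qed
  define W where "W = Cones v - {Cone v v}"
  define F where "F S = {x. Cone x v \<in> S}" for S
  have img: "QA ` Set1 \<subseteq> F ` (Pow W - {{}})"
  proof
    fix Q assume "Q \<in> QA ` Set1"
    then obtain A where A: "A \<in> Set1" "Q = QA A" by blast
    note r = rep1[OF A(1)]
    define S where "S = (\<lambda>x. Cone x v) ` Q"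
    have "S \<subseteq> Cones v" unfolding S_def Cones_def by blast
    moreover have "Cone v v \<notin> S"
    proof
      assume "Cone v v \<in> S"
      then obtain x where "x \<in> Q" "Cone x v = Cone v v" unfolding S_def by blast
      then show False using r A(2) by blast
    qed
    moreover have "S \<noteq> {}" using r A(2) unfolding S_def by blast
    moreover have "Q = F S"
    proof
      show "Q \<subseteq> F S" unfolding S_def F_def by blast
      show "F S \<subseteq> Q"
      proof
        fix x assume "x \<in> F S"
        then obtain x' where "x' \<in> Q" "Cone x v = Cone x' v" unfolding F_def S_def by auto
        then show "x \<in> Q" using r A(2) by metis
      qed
    qed
    ultimately show "Q \<in> F ` (Pow W - {{}})" unfolding W_def by blast
  qed
  have finW: "finite W" using fin unfolding W_def by simp
  have cW: "card W = card (Cones v) - 1"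
  proof -
    have "Cone v v \<in> Cones v" unfolding Cones_def by blast
    then show ?thesis unfolding W_def using fin by (simp add: card_Diff_singleton)
  qed
  have cP: "card (Pow W - {{}}) = 2 ^ (card (Cones v) - 1) - 1"
    using finW cW by (simp add: card_Diff_singleton card_Pow)
  have finP: "finite (F ` (Pow W - {{}}))" using finW by simp
  have fin1: "finite Set1"
    using finite_imageD[OF finite_subset[OF img finP] inj] .
  have "card Set1 = card (QA ` Set1)" using card_image[OF inj] by simp
  also have "\<dots> \<le> card (F ` (Pow W - {{}}))" using card_mono[OF finP img] .
  also have "\<dots> \<le> card (Pow W - {{}})" using finW by (intro card_image_le) simp
  finally have "card Set1 \<le> 2 ^ (card (Cones v) - 1) - 1" using cP by simp
  then show ?thesis using part1 fin1 unfolding Set1_def by blast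
qed

end
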